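(* Let $F$ satisfy the structure condition (S) with constants $0<\lambda\le\Lambda$ and bounded continuous $b\ge0$, $c\le0$, and $F(x,t,0,0,0)=0$. Let $u$ be a continuous viscosity subsolution (resp. supersolution) of $F(x,t,u,Du,D^2u)-\partial_tu=0$ in the cylinder $\mathbb{Q}^{t_1,t_2}_{x_0,R}$ and on its upper base $Q^{t_2}_{x_0,R}$. If $u$ attains its maximum (resp. minimum) $M$ over $\mathbb{Q}^{t_1,t_2}_{x_0,R}\cup Q^{t_2}_{x_0,R}$ at the point $(x_0,t_2)$ and $M\ge0$ (resp. $M\le 0$), then $u(x_0,t)=M$ for all $t\in(t_1,t_2)$.
   Context: Structure condition (S): for all $(x,t)$ in the domain, $r,s\in\mathbb{R}$, $p,q\in\mathbb{R}^n$, $M,N\in\mathcal{S}_n$ (symmetric $n\times n$ matrices) with $N\ge 0$, $$\lambda\,\mathrm{Tr}(N)-b(x,t)|p-q|+c(x,t)(r-s)\le F(x,t,r,p,M+N)-F(x,t,s,q,M)\le \Lambda\,\mathrm{Tr}(N)+b(x,t)|p-q|+c(x,t)(r-s).$$ $\mathbb{Q}^{t_1,t_2}_{x_0,R}=\{(x,t):|x-x_0|<R,\ t_1<t<t_2\}$ and $Q^{t_2}_{x_0,R}=\{(x,t_2):|x-x_0|<R\}$ is its upper base. Being a viscosity subsolution on the upper base means the viscosity inequality holds at points with $t=t_2$, tested from the past. *)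

theory Defs
  imports "HOL-Analysis.Analysis"
begin

type_synonym 'n nonlin =
  "real^'n \<Rightarrow> real \<Rightarrow> real \<Rightarrow> real^'n \<Rightarrow> real^'n^'n \<Rightarrow> real"

definition sym_mat :: "real^'n^'n \<Rightarrow> bool" where
  "sym_mat A \<longleftrightarrow> transpose A = A"

definition psd_mat :: "real^'n^'n \<Rightarrow> bool" where
  "psd_mat A \<longleftrightarrow> (\<forall>v. 0 \<le> v \<bullet> (A *v v))"

definition structure_S ::
  "('n::finite) nonlin \<Rightarrow> real \<Rightarrow> real \<Rightarrow> (real^'n \<Rightarrow> real \<Rightarrow> real)
     \<Rightarrow> (real^'n \<Rightarrow> real \<Rightarrow> real) \<Rightarrow> ((real^'n) \<times> real) set \<Rightarrow> bool" where
  "structure_S F lam Lam b c D \<longleftrightarrow>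
    (\<forall>x t r s p q M N. (x,t) \<in> D \<longrightarrow> sym_mat M \<longrightarrow> sym_mat N \<longrightarrow> psd_mat N \<longrightarrow>
       lam * trace N - b x t * norm (p - q) + c x t * (r - s)
         \<le> F x t r p (M + N) - F x t s q M
     \<and> F x t r p (M + N) - F x t s q M
         \<le> Lam * trace N + b x t * norm (p - q) + c x t * (r - s))"

definition cyl :: "real^'n \<Rightarrow> real \<Rightarrow> real \<Rightarrow> real \<Rightarrow> ((real^'n) \<times> real) set" where
  "cyl x0 R t1 t2 = {(x,t). dist x x0 < R \<and> t1 < t \<and> t < t2}"

definition upper_base :: "real^'n \<Rightarrow> real \<Rightarrow> real \<Rightarrow> ((real^'n) \<times> real) set" where
  "upper_base x0 R t2 = {(x,t). dist x x0 < R \<and> t = t2}"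

definition test_fun ::
  "(real^'n \<Rightarrow> real \<Rightarrow> real) \<Rightarrow> (real^'n \<Rightarrow> real \<Rightarrow> real^'n)
     \<Rightarrow> (real^'n \<Rightarrow> real \<Rightarrow> real^'n^'n) \<Rightarrow> (real^'n \<Rightarrow> real \<Rightarrow> real) \<Rightarrow> bool" where
  "test_fun phi Dphi D2phi phit \<longleftrightarrow>
     continuous_on UNIV (\<lambda>(x,t). Dphi x t) \<and>
     continuous_on UNIV (\<lambda>(x,t). D2phi x t) \<and>
     continuous_on UNIV (\<lambda>(x,t). phit x t) \<and>
     (\<forall>x t. ((\<lambda>y. phi y t) has_derivative (\<lambda>h. Dphi x t \<bullet> h)) (at x)) \<and>
     (\<forall>x t. ((\<lambda>y. Dphi y t) has_derivative (\<lambda>h. D2phi x t *v h)) (at x)) \<and>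
     (\<forall>x t. ((\<lambda>s. phi x s) has_real_derivative phit x t) (at t))"

text \<open>u - phi has a local maximum (minimum) at (x,t) relative to D.  For points
  of the upper base this means that only points from the past are compared.\<close>
definition loc_max_rel ::
  "((real^'n) \<times> real) set \<Rightarrow> (real^'n \<Rightarrow> real \<Rightarrow> real) \<Rightarrow> real^'n \<Rightarrow> real \<Rightarrow> bool" where
  "loc_max_rel D w x t \<longleftrightarrow> (\<exists>e>0. \<forall>y s. (y,s) \<in> D \<longrightarrow> dist y x < e \<longrightarrow> \<bar>s - t\<bar> < e
      \<longrightarrow> w y s \<le> w x t)"

definition loc_min_rel ::
  "((real^'n) \<times> real) set \<Rightarrow> (real^'n \<Rightarrow> real \<Rightarrow> real) \<Rightarrow> real^'n \<Rightarrow> real \<Rightarrow> bool" where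
  "loc_min_rel D w x t \<longleftrightarrow> (\<exists>e>0. \<forall>y s. (y,s) \<in> D \<longrightarrow> dist y x < e \<longrightarrow> \<bar>s - t\<bar> < e
      \<longrightarrow> w x t \<le> w y s)"

definition visc_sub ::
  "('n::finite) nonlin \<Rightarrow> ((real^'n) \<times> real) set \<Rightarrow> (real^'n \<Rightarrow> real \<Rightarrow> real) \<Rightarrow> bool" where
  "visc_sub F D u \<longleftrightarrow>
    (\<forall>x t phi Dphi D2phi phit. (x,t) \<in> D \<longrightarrow> test_fun phi Dphi D2phi phit \<longrightarrow>
       loc_max_rel D (\<lambda>y s. u y s - phi y s) x t \<longrightarrow>
       F x t (u x t) (Dphi x t) (D2phi x t) - phit x t \<ge> 0)"

definition visc_super ::
  "('n::finite) nonlin \<Rightarrow> ((real^'n) \<times> real) set \<Rightarrow> (real^'n \<Rightarrow> real \<Rightarrow> real) \<Rightarrow> bool" where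
  "visc_super F D u \<longleftrightarrow>
    (\<forall>x t phi Dphi D2phi phit. (x,t) \<in> D \<longrightarrow> test_fun phi Dphi D2phi phit \<longrightarrow>
       loc_min_rel D (\<lambda>y s. u y s - phi y s) x t \<longrightarrow>
       F x t (u x t) (Dphi x t) (D2phi x t) - phit x t \<le> 0)"

end

theory Submission
  imports Defs
begin


lemma neg_mat_mult: "(- A) *v h = - (A *v (h::real^'n))"
  by (simp add: matrix_vector_mult_def vec_eq_iff sum_negf)

definition outer :: "real^'n \<Rightarrow> real^'n^'n" where "outer y = (\<chi> i j. y$i * y$j)"

lemma outer_mult: "outer y *v h = (y \<bullet> h) *\<^sub>R y"
  by (simp add: outer_def vec_eq_iff matrix_vector_mult_def inner_vec_def sum_distrib_left mult_ac)

lemma trace_outer: "trace (outer y) = norm y ^ 2"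
  by (simp add: outer_def trace_def power2_norm_eq_inner inner_vec_def)

lemma psd_outer: "psd_mat (outer y)"
  by (simp add: psd_mat_def outer_mult inner_commute)

lemma sym_outer: "sym_mat (outer y)"
  by (simp add: sym_mat_def outer_def transpose_def vec_eq_iff mult.commute)

lemma trace_scaleR: "trace (a *\<^sub>R A) = a * trace (A::real^'n^'n)"
  by (simp add: trace_def sum_distrib_left)

lemma trace_I_real: "trace (mat 1 :: real^'n^'n) = real CARD('n)"
  by (simp add: trace_I)

lemma psd_I: "0 \<le> a \<Longrightarrow> psd_mat (a *\<^sub>R (mat 1 :: real^'n^'n))"
  by (simp add: psd_mat_def flip: scaleR_matrix_vector_assoc)

lemma psd_scale: "0 \<le> a \<Longrightarrow> psd_mat A \<Longrightarrow> psd_mat (a *\<^sub>R (A :: real^'n^'n))"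
  by (simp add: psd_mat_def flip: scaleR_matrix_vector_assoc)

lemma sym_I: "sym_mat (mat 1 :: real^'n^'n)"
  by (simp add: sym_mat_def transpose_mat)

lemma sym_0: "sym_mat (0 :: real^'n^'n)"
  by (simp add: sym_mat_def transpose_def vec_eq_iff)

lemma sym_add: "sym_mat A \<Longrightarrow> sym_mat B \<Longrightarrow> sym_mat (A + B :: real^'n^'n)"
  by (simp add: sym_mat_def transpose_def vec_eq_iff)

lemma sym_diff: "sym_mat A \<Longrightarrow> sym_mat B \<Longrightarrow> sym_mat (A - B :: real^'n^'n)"
  by (simp add: sym_mat_def transpose_def vec_eq_iff)

lemma sym_neg: "sym_mat A \<Longrightarrow> sym_mat (- A :: real^'n^'n)"
  by (simp add: sym_mat_def transpose_def vec_eq_iff)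

lemma sym_scale: "sym_mat A \<Longrightarrow> sym_mat (a *\<^sub>R A :: real^'n^'n)"
  by (simp add: sym_mat_def transpose_def vec_eq_iff)



lemma continuous_on_outer[continuous_intros]:
  "continuous_on S f \<Longrightarrow> continuous_on S (\<lambda>x. outer (f x :: real^'n))"
  unfolding outer_def by (intro continuous_intros)

definition "bphi M \<eta> \<beta> \<alpha> r x0 ts = (\<lambda>x t. M - \<eta> * exp(-\<beta>*(t-ts)) * (exp(-\<alpha> * norm(x-x0)^2) - exp(-\<alpha>*r^2)))"
definition "bDphi \<eta> \<beta> \<alpha> x0 ts = (\<lambda>x t. (2*\<alpha>*(\<eta>*exp(-\<beta>*(t-ts))*exp(-\<alpha>*norm(x-x0)^2))) *\<^sub>R (x - x0))"
definition "bD2phi \<eta> \<beta> \<alpha> x0 ts = (\<lambda>x t. (2*\<alpha>*(\<eta>*exp(-\<beta>*(t-ts))*exp(-\<alpha>*norm(x-x0)^2))) *\<^sub>R mat 1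
     - (4*\<alpha>^2*(\<eta>*exp(-\<beta>*(t-ts))*exp(-\<alpha>*norm(x-x0)^2))) *\<^sub>R outer (x-x0))"
definition "bphit \<eta> \<beta> \<alpha> r x0 ts = (\<lambda>x t. \<beta>*\<eta>*exp(-\<beta>*(t-ts))*(exp(-\<alpha>*norm(x-x0)^2) - exp(-\<alpha>*r^2)))"

lemma barrier_test:
  fixes x0 :: "real^'n"
  shows "test_fun (bphi M \<eta> \<beta> \<alpha> r x0 ts) (bDphi \<eta> \<beta> \<alpha> x0 ts) (bD2phi \<eta> \<beta> \<alpha> x0 ts) (bphit \<eta> \<beta> \<alpha> r x0 ts)"
  unfolding test_fun_def
proof (intro conjI allI)
  show "continuous_on UNIV (\<lambda>(x, t). bDphi \<eta> \<beta> \<alpha> x0 ts x t)"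
    unfolding bDphi_def case_prod_unfold by (intro continuous_intros)
  show "continuous_on UNIV (\<lambda>(x, t). bD2phi \<eta> \<beta> \<alpha> x0 ts x t)"
    unfolding bD2phi_def case_prod_unfold by (intro continuous_intros)
  show "continuous_on UNIV (\<lambda>(x, t). bphit \<eta> \<beta> \<alpha> r x0 ts x t)"
    unfolding bphit_def case_prod_unfold by (intro continuous_intros)
next
  fix x :: "real^'n" and t
  have n: "\<And>y. norm (y - x0) ^ 2 = (y - x0) \<bullet> (y - x0)" by (simp add: power2_norm_eq_inner)
  show "((\<lambda>y. bphi M \<eta> \<beta> \<alpha> r x0 ts y t) has_derivative (\<lambda>h. bDphi \<eta> \<beta> \<alpha> x0 ts x t \<bullet> h)) (at x)"
    unfolding bphi_def bDphi_def n
    apply (rule derivative_eq_intros refl | simp)+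
    apply (simp add: algebra_simps inner_commute)
    done
  show "((\<lambda>y. bDphi \<eta> \<beta> \<alpha> x0 ts y t) has_derivative (\<lambda>h. bD2phi \<eta> \<beta> \<alpha> x0 ts x t *v h)) (at x)"
    unfolding bD2phi_def bDphi_def n
    apply (rule derivative_eq_intros refl | simp)+
    apply (rule ext)
    apply (simp add: matrix_vector_mult_diff_rdistrib outer_mult inner_commute power2_eq_square flip: scaleR_matrix_vector_assoc)
    done
  show "((\<lambda>s. bphi M \<eta> \<beta> \<alpha> r x0 ts x s) has_real_derivative bphit \<eta> \<beta> \<alpha> r x0 ts x t) (at t)"
    unfolding bphi_def bphit_def
    apply (rule derivative_eq_intros refl | simp)+
    done
qed



lemma strict_arith:
  fixes lam Lam n B C r \<rho> P \<alpha> \<beta> :: real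
  assumes "0<lam" "0 \<le> Lam" "0 \<le> n" "0 \<le> B" "0 \<le> C" "0 < r" "0 \<le> \<rho>" "\<rho> < r" "0 < P"
    "\<alpha> \<ge> 1" "\<alpha>*r^2 \<ge> 4" "lam*\<alpha>*r^2 \<ge> 2*Lam*n+2*B*r+C+1"
    "\<beta> = 2*(2*\<alpha>*Lam*n+2*\<alpha>*B*r+C)+1"
  shows "P*exp(-\<alpha>*\<rho>^2)*(2*\<alpha>*Lam*n - 4*lam*\<alpha>^2*\<rho>^2 + 2*\<alpha>*B*\<rho> + C)
          - \<beta>*P*(exp(-\<alpha>*\<rho>^2) - exp(-\<alpha>*r^2)) < 0"
proof -
  define E where "E = exp(-\<alpha>*\<rho>^2)"
  define er where "er = exp(-\<alpha>*r^2)"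
  have E0: "0 < E" by (simp add: E_def)
  have K0: "0 < P*E" using E0 assms by simp
  have rho2: "\<rho>^2 < r^2" using assms by (simp add: power_strict_mono)
  have Eer: "er \<le> E" unfolding E_def er_def using rho2 assms by simp
  show ?thesis
  proof (cases "\<rho> \<ge> r/2")
    case True
    have "\<rho>^2 \<ge> (r/2)^2" using True assms by (simp add: power_mono)
    hence "4*lam*\<alpha>^2*\<rho>^2 \<ge> lam*\<alpha>^2*r^2" using assms by (simp add: power2_eq_square)
    moreover have "lam*\<alpha>^2*r^2 \<ge> \<alpha>*(2*Lam*n+2*B*r+C+1)"
      using mult_left_mono[OF assms(12), of \<alpha>] assms by (simp add: power2_eq_square mult_ac)
    moreover have "2*\<alpha>*B*\<rho> \<le> 2*\<alpha>*B*r" using assms by (simp add: mult_left_mono)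
    moreover have "C \<le> \<alpha>*C" using assms by (simp add: mult_right_mono[of 1 \<alpha> C, simplified])
    ultimately have G: "2*\<alpha>*Lam*n - 4*lam*\<alpha>^2*\<rho>^2 + 2*\<alpha>*B*\<rho> + C < 0"
      using assms by (simp only: distrib_left; linarith)
    have "P*E*(2*\<alpha>*Lam*n - 4*lam*\<alpha>^2*\<rho>^2 + 2*\<alpha>*B*\<rho> + C) < 0"
      using K0 G by (simp add: mult_pos_neg)
    moreover have "0 \<le> \<beta>*P*(E - er)" using Eer assms by simp
    ultimately show ?thesis unfolding E_def[symmetric] er_def[symmetric] by linarith
  next
    case False
    define Q where "Q = 2*\<alpha>*Lam*n+2*\<alpha>*B*r+C"
    have "2*\<alpha>*B*\<rho> \<le> 2*\<alpha>*B*r" using assms by (simp add: mult_left_mono)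
    moreover have "0 \<le> 4*lam*\<alpha>^2*\<rho>^2" using assms by simp
    ultimately have G: "2*\<alpha>*Lam*n - 4*lam*\<alpha>^2*\<rho>^2 + 2*\<alpha>*B*\<rho> + C \<le> Q"
      unfolding Q_def by linarith
    have Q0: "0 \<le> Q" unfolding Q_def using assms by simp
    have "\<rho>^2 \<le> (r/2)^2" using False assms by (simp add: power_mono)
    hence "\<alpha>*\<rho>^2 \<le> \<alpha>*(r/2)^2" using assms by (intro mult_left_mono) auto
    hence "\<alpha>*(r^2 - \<rho>^2) \<ge> 3" using assms(11) by (simp add: power_divide right_diff_distrib)
    hence "exp(-\<alpha>*(r^2 - \<rho>^2)) \<le> exp(-3)" by simp
    also have "exp(-3::real) \<le> 1/2"
    proof -
      have "1 + 3 \<le> exp(3::real)" by (rule exp_ge_add_one_self)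
      thus ?thesis by (simp add: exp_minus field_simps)
    qed
    finally have X: "exp(-\<alpha>*(r^2 - \<rho>^2)) \<le> 1/2" .
    have eq: "er = E * exp(-\<alpha>*(r^2 - \<rho>^2))"
      unfolding E_def er_def by (simp add: algebra_simps flip: exp_add)
    have "er \<le> E/2" unfolding eq using mult_left_mono[OF X, of E] E0 by simp
    hence "\<beta>*P*(E - er) \<ge> \<beta>*P*(E/2)" using assms Q0 by (intro mult_left_mono) (auto simp: Q_def)
    moreover have "P*E*(2*\<alpha>*Lam*n - 4*lam*\<alpha>^2*\<rho>^2 + 2*\<alpha>*B*\<rho> + C) \<le> P*E*Q"
      using G K0 by (simp add: mult_left_mono)
    moreover have "P*E*Q < \<beta>*P*(E/2)" using K0 Q0 assms(13) unfolding Q_def[symmetric]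
      by (simp add: algebra_simps)
    ultimately show ?thesis unfolding E_def[symmetric] er_def[symmetric] by linarith
  qed
qed



lemma sub_case:
  fixes F :: "('n::finite) nonlin" and b c u :: "real^'n \<Rightarrow> real \<Rightarrow> real"
    and x0 :: "real^'n" and lam Lam R t1 t2 M t :: real
  assumes D_def: "D = cyl x0 R t1 t2 \<union> upper_base x0 R t2"
    and lam_pos: "0 < lam" and lam_le: "lam \<le> Lam"
    and S: "structure_S F lam Lam b c D"
    and b_bdd: "bounded ((\<lambda>(x,t). b x t) ` D)"
    and c_bdd: "bounded ((\<lambda>(x,t). c x t) ` D)"
    and c_nonpos: "\<forall>(x,t)\<in>D. c x t \<le> 0"
    and F0: "\<forall>(x,t)\<in>D. F x t 0 0 0 = 0"
    and u_cont: "continuous_on D (\<lambda>(x,t). u x t)"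
    and top: "(x0,t2) \<in> D" and uM: "u x0 t2 = M"
    and sub: "visc_sub F D u" and le: "\<forall>(x,t)\<in>D. u x t \<le> M" and M0: "0 \<le> M"
    and tt: "t1 < t" "t < t2"
  shows "u x0 t = M"
proof (rule ccontr)
  assume ne: "u x0 t \<noteq> M"
  have R0: "0 < R" using top unfolding D_def cyl_def upper_base_def by auto
  have inD: "\<And>x s. dist x x0 < R \<Longrightarrow> t1 < s \<Longrightarrow> s \<le> t2 \<Longrightarrow> (x,s) \<in> D"
    unfolding D_def cyl_def upper_base_def by auto
  have Dchar: "\<And>x s. (x,s) \<in> D \<Longrightarrow> dist x x0 < R \<and> t1 < s \<and> s \<le> t2"
    unfolding D_def cyl_def upper_base_def using tt by auto
  have tD: "(x0,t) \<in> D" using inD R0 tt by auto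
  hence "u x0 t < M" using le ne by fastforce
  define \<eta> where "\<eta> = (M - u x0 t)/2"
  have eta0: "0 < \<eta>" using \<open>u x0 t < M\<close> by (simp add: \<eta>_def)
  obtain \<delta> where d0: "\<delta> > 0" and dprop: "\<forall>z\<in>D. dist z (x0,t) < \<delta> \<longrightarrow>
      dist ((\<lambda>(x,t). u x t) z) ((\<lambda>(x,t). u x t) (x0,t)) < \<eta>"
    using u_cont tD eta0 unfolding continuous_on_iff by metis
  define r where "r = min (\<delta>/2) (R/2)"
  have r0: "0 < r" and rR: "r < R" and rd: "r < \<delta>" using d0 R0 by (auto simp: r_def)
  have bot: "\<And>x. dist x x0 \<le> r \<Longrightarrow> u x t \<le> M - \<eta>"
  proof -
    fix x assume "dist x x0 \<le> r"
    hence xD: "(x,t) \<in> D" and "dist (x,t) (x0,t) < \<delta>" using inD rR rd tt by (auto simp: dist_Pair_Pair)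
    hence "dist (u x t) (u x0 t) < \<eta>" using dprop by fastforce
    thus "u x t \<le> M - \<eta>" using abs_ge_self[of "u x t - u x0 t"] by (simp add: dist_real_def \<eta>_def field_simps)
  qed
  obtain B0 where B0: "\<forall>z\<in>(\<lambda>(x,t). b x t) ` D. norm z \<le> B0" using b_bdd bounded_iff by metis
  obtain C0 where C0: "\<forall>z\<in>(\<lambda>(x,t). c x t) ` D. norm z \<le> C0" using c_bdd bounded_iff by metis
  define B where "B = max B0 0"
  define C where "C = max C0 0"
  have Bb: "\<And>x s. (x,s) \<in> D \<Longrightarrow> \<bar>b x s\<bar> \<le> B" using B0 unfolding B_def by force
  have Cc: "\<And>x s. (x,s) \<in> D \<Longrightarrow> \<bar>c x s\<bar> \<le> C" using C0 unfolding C_def by force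
  have B00: "0 \<le> B" "0 \<le> C" by (auto simp: B_def C_def)
  define n where "n = real CARD('n)"
  have n0: "0 \<le> n" by (simp add: n_def)
  have Lam0: "0 \<le> Lam" using lam_pos lam_le by simp
  define \<alpha> where "\<alpha> = max 1 (max (4/r^2) ((2*Lam*n+2*B*r+C+1)/(lam*r^2)))"
  have a1: "\<alpha> \<ge> 1" by (simp add: \<alpha>_def)
  have a2: "\<alpha>*r^2 \<ge> 4"
  proof -
    have "4/r^2 \<le> \<alpha>" by (simp add: \<alpha>_def)
    thus ?thesis using r0 by (simp add: field_simps)
  qed
  have a3: "lam*\<alpha>*r^2 \<ge> 2*Lam*n+2*B*r+C+1"
  proof -
    have "(2*Lam*n+2*B*r+C+1)/(lam*r^2) \<le> \<alpha>" by (simp add: \<alpha>_def)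
    thus ?thesis using r0 lam_pos by (simp add: field_simps)
  qed
  have a0: "0 < \<alpha>" using a1 by simp
  define \<beta> where "\<beta> = 2*(2*\<alpha>*Lam*n+2*\<alpha>*B*r+C)+1"
  define \<phi> where "\<phi> = bphi M \<eta> \<beta> \<alpha> r x0 t"
  define D\<phi> where "D\<phi> = bDphi \<eta> \<beta> \<alpha> x0 t"
  define D2\<phi> where "D2\<phi> = bD2phi \<eta> \<beta> \<alpha> x0 t"
  define \<phi>t where "\<phi>t = bphit \<eta> \<beta> \<alpha> r x0 t"
  have test: "test_fun \<phi> D\<phi> D2\<phi> \<phi>t" unfolding \<phi>_def D\<phi>_def D2\<phi>_def \<phi>t_def by (rule barrier_test)
  have strict: "F x s U (D\<phi> x s) (D2\<phi> x s) - \<phi>t x s < 0"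
    if xs: "(x,s) \<in> D" and xr: "dist x x0 < r" and U: "U > \<phi> x s" for x s U
  proof -
    define y where "y = x - x0"
    define \<rho> where "\<rho> = norm y"
    define P where "P = \<eta>*exp(-\<beta>*(s-t))"
    define E where "E = exp(-\<alpha>*\<rho>^2)"
    define er where "er = exp(-\<alpha>*r^2)"
    define K where "K = P*E"
    have P0: "0 < P" using eta0 by (simp add: P_def)
    have K0: "0 < K" using P0 by (simp add: K_def E_def)
    have rho0: "0 \<le> \<rho>" and rhor: "\<rho> < r" using xr by (auto simp: \<rho>_def y_def dist_norm)
    have Eer: "er \<le> E" using rhor rho0 a0 by (simp add: E_def er_def power_strict_mono)
    have Dphi_eq: "D\<phi> x s = (2*\<alpha>*K) *\<^sub>R y"
      by (simp add: D\<phi>_def bDphi_def K_def P_def E_def \<rho>_def y_def)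
    have D2_eq: "D2\<phi> x s = (2*\<alpha>*K) *\<^sub>R mat 1 - (4*\<alpha>^2*K) *\<^sub>R outer y"
      by (simp add: D2\<phi>_def bD2phi_def K_def P_def E_def \<rho>_def y_def)
    have phit_eq: "\<phi>t x s = \<beta>*P*(E - er)"
      by (simp add: \<phi>t_def bphit_def P_def E_def er_def \<rho>_def y_def)
    have phi_eq: "\<phi> x s = M - P*(E - er)"
      by (simp add: \<phi>_def bphi_def P_def E_def er_def \<rho>_def y_def)
    define N where "N = (4*\<alpha>^2*K) *\<^sub>R outer y"
    define N2 where "N2 = (2*\<alpha>*K) *\<^sub>R (mat 1 :: real^'n^'n)"
    have symD2: "sym_mat (D2\<phi> x s)" unfolding D2_eq
      by (intro sym_diff sym_scale sym_I sym_outer)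
    have symN: "sym_mat N" unfolding N_def by (intro sym_scale sym_outer)
    have psdN: "psd_mat N" unfolding N_def using K0 by (intro psd_scale psd_outer) simp
    have symN2: "sym_mat N2" unfolding N2_def by (intro sym_scale sym_I)
    have psdN2: "psd_mat N2" unfolding N2_def using K0 a0 by (intro psd_I) simp
    have sum1: "D2\<phi> x s + N = N2" unfolding D2_eq N_def N2_def by simp
    have S1: "lam * trace N - b x s * norm (0 - D\<phi> x s) + c x s * (0 - U)
         \<le> F x s 0 0 (D2\<phi> x s + N) - F x s U (D\<phi> x s) (D2\<phi> x s)"
      using S xs symD2 symN psdN unfolding structure_S_def by blast
    have S2: "F x s 0 0 (0 + N2) - F x s 0 0 0 \<le> Lam * trace N2 + b x s * norm ((0::real^'n) - 0) + c x s * (0 - 0)"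
      using S xs sym_0 symN2 psdN2 unfolding structure_S_def by blast
    have F00: "F x s 0 0 0 = 0" using F0 xs by blast
    have trN: "trace N = 4*\<alpha>^2*K*\<rho>^2" by (simp add: N_def trace_scaleR trace_outer \<rho>_def)
    have trN2: "trace N2 = 2*\<alpha>*K*n" by (simp add: N2_def trace_scaleR trace_I n_def)
    have nD: "norm (0 - D\<phi> x s) = 2*\<alpha>*K*\<rho>" using K0 a0 by (simp add: Dphi_eq \<rho>_def)
    have bterm: "b x s * (2*\<alpha>*K*\<rho>) \<le> B * (2*\<alpha>*K*\<rho>)"
      using Bb[OF xs] K0 a0 rho0 by (intro mult_right_mono) auto
    have cneg: "c x s \<le> 0" using c_nonpos xs by blast
    have "c x s * U \<le> c x s * \<phi> x s" using cneg U by (simp add: mult_left_mono_neg)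
    also have "\<dots> = c x s * M - c x s * K + c x s * P * er"
      by (simp add: phi_eq K_def algebra_simps)
    also have "\<dots> \<le> C * K"
    proof -
      have "c x s * M \<le> 0" using cneg M0 by (simp add: mult_nonpos_nonneg)
      moreover have "c x s * P * er \<le> 0" using cneg P0 by (simp add: er_def mult_nonpos_nonneg)
      moreover have "- c x s * K \<le> C * K" using Cc[OF xs] K0 by (intro mult_right_mono) auto
      ultimately show ?thesis by linarith
    qed
    finally have cterm: "c x s * U \<le> C * K" .
    have "F x s U (D\<phi> x s) (D2\<phi> x s) \<le> Lam*(2*\<alpha>*K*n) - lam*(4*\<alpha>^2*K*\<rho>^2) + B * (2*\<alpha>*K*\<rho>) + C*K"
      using S1 S2 F00 sum1 trN trN2 nD bterm cterm by simp
    hence "F x s U (D\<phi> x s) (D2\<phi> x s) - \<phi>t x s \<le>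
        P*exp(-\<alpha>*\<rho>^2)*(2*\<alpha>*Lam*n - 4*lam*\<alpha>^2*\<rho>^2 + 2*\<alpha>*B*\<rho> + C)
          - \<beta>*P*(exp(-\<alpha>*\<rho>^2) - exp(-\<alpha>*r^2))"
      unfolding phit_eq by (simp add: K_def E_def er_def algebra_simps)
    also have "\<dots> < 0"
      by (rule strict_arith[OF lam_pos Lam0 n0 B00 r0 rho0 rhor P0 a1 a2 a3 \<beta>_def])
    finally show ?thesis .
  qed
  define \<Omega> where "\<Omega> = cball x0 r \<times> {t..t2}"
  define w where "w = (\<lambda>z. u (fst z) (snd z) - \<phi> (fst z) (snd z))"
  have OD: "\<Omega> \<subseteq> D" unfolding \<Omega>_def using inD rR tt by (auto simp: dist_commute)
  have cpt: "compact \<Omega>" unfolding \<Omega>_def by (intro compact_Times compact_cball compact_Icc)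
  have ne\<Omega>: "\<Omega> \<noteq> {}" unfolding \<Omega>_def using r0 tt by auto
  have phicont: "continuous_on UNIV (\<lambda>z. \<phi> (fst z) (snd z))"
    unfolding \<phi>_def bphi_def by (intro continuous_intros)
  have wcont: "continuous_on \<Omega> w"
  proof -
    have "continuous_on \<Omega> (\<lambda>(x,t). u x t)" using continuous_on_subset[OF u_cont OD] .
    hence "continuous_on \<Omega> (\<lambda>z. u (fst z) (snd z))" by (simp add: case_prod_unfold)
    thus ?thesis unfolding w_def using continuous_on_subset[OF phicont]
      by (intro continuous_intros) auto
  qed
  obtain z0 where z0: "z0 \<in> \<Omega>" and zmax: "\<forall>z\<in>\<Omega>. w z \<le> w z0"
    using continuous_attains_sup[OF cpt ne\<Omega> wcont] by blast
  obtain xh th where z0e: "z0 = (xh,th)" by fastforce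
  have wle: "w z0 \<le> 0"
  proof (rule ccontr)
    assume pos: "\<not> w z0 \<le> 0"
    have xhr: "dist xh x0 \<le> r" and th: "t \<le> th" "th \<le> t2" using z0 unfolding z0e \<Omega>_def
      by (auto simp: dist_commute)
    have hD: "(xh,th) \<in> D" using OD z0 z0e by auto
    show False
    proof (cases "th = t")
      case True
      have "exp(-\<alpha>*norm(xh-x0)^2) \<le> 1" using a0 by simp
      moreover have "0 < exp(-\<alpha>*r^2)" by simp
      ultimately have E1: "exp(-\<alpha>*norm(xh-x0)^2) - exp(-\<alpha>*r^2) \<le> 1" by linarith
      have "\<phi> xh th \<ge> M - \<eta>" unfolding \<phi>_def bphi_def True using eta0 E1
        by (simp add: mult_left_le)
      moreover have "u xh th \<le> M - \<eta>" using bot xhr True by simp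
      ultimately show False using pos by (simp add: w_def z0e)
    next
      case False
      hence thgt: "t < th" using th by simp
      show False
      proof (cases "dist xh x0 = r")
        case True
        hence "\<phi> xh th = M" by (simp add: \<phi>_def bphi_def dist_norm)
        moreover have "u xh th \<le> M" using le hD by blast
        ultimately show False using pos by (simp add: w_def z0e)
      next
        case False
        hence xlt: "dist xh x0 < r" using xhr by simp
        have lm: "loc_max_rel D (\<lambda>y s. u y s - \<phi> y s) xh th"
          unfolding loc_max_rel_def
        proof (intro exI[of _ "min (r - dist xh x0) (th - t)"] conjI allI impI)
          show "0 < min (r - dist xh x0) (th - t)" using xlt thgt by simp
          fix y s assume yD: "(y,s) \<in> D" and dy: "dist y xh < min (r - dist xh x0) (th - t)"
            and ds: "\<bar>s - th\<bar> < min (r - dist xh x0) (th - t)"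
          have "dist y x0 \<le> dist y xh + dist xh x0" by (rule dist_triangle)
          hence "dist y x0 \<le> r" using dy by simp
          moreover have "t \<le> s" using ds by (simp add: abs_less_iff)
          moreover have "s \<le> t2" using Dchar[OF yD] by simp
          ultimately have "(y,s) \<in> \<Omega>" unfolding \<Omega>_def by (simp add: dist_commute)
          thus "u y s - \<phi> y s \<le> u xh th - \<phi> xh th" using zmax z0e by (auto simp: w_def)
        qed
        have "F xh th (u xh th) (D\<phi> xh th) (D2\<phi> xh th) - \<phi>t xh th \<ge> 0"
          using sub hD test lm unfolding visc_sub_def by blast
        moreover have "u xh th > \<phi> xh th" using pos by (simp add: w_def z0e)
        ultimately show False using strict[OF hD xlt] by fastforce
      qed
    qed
  qed
  have "(x0,t2) \<in> \<Omega>" unfolding \<Omega>_def using r0 tt by auto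
  hence "w (x0,t2) \<le> 0" using zmax wle by fastforce
  hence "M \<le> \<phi> x0 t2" using uM by (simp add: w_def)
  moreover have "\<phi> x0 t2 < M"
  proof -
    have "exp(-\<alpha>*r^2) < 1" using a0 r0 by simp
    thus ?thesis using eta0 by (simp add: \<phi>_def bphi_def)
  qed
  ultimately show False by simp
qed


theorem lemma3p2:
  fixes F :: "('n::finite) nonlin"
    and b c :: "real^'n \<Rightarrow> real \<Rightarrow> real"
    and u :: "real^'n \<Rightarrow> real \<Rightarrow> real"
    and x0 :: "real^'n"
    and lam Lam R t1 t2 M :: real
  defines "D \<equiv> cyl x0 R t1 t2 \<union> upper_base x0 R t2"
  assumes lam_pos: "0 < lam" and lam_le: "lam \<le> Lam"
    and S: "structure_S F lam Lam b c D"
    and b_cont: "continuous_on D (\<lambda>(x,t). b x t)" and b_bdd: "bounded ((\<lambda>(x,t). b x t) ` D)"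
    and b_nonneg: "\<forall>(x,t)\<in>D. 0 \<le> b x t"
    and c_cont: "continuous_on D (\<lambda>(x,t). c x t)" and c_bdd: "bounded ((\<lambda>(x,t). c x t) ` D)"
    and c_nonpos: "\<forall>(x,t)\<in>D. c x t \<le> 0"
    and F0: "\<forall>(x,t)\<in>D. F x t 0 0 0 = 0"
    and u_cont: "continuous_on D (\<lambda>(x,t). u x t)"
    and top: "(x0, t2) \<in> D" and uM: "u x0 t2 = M"
  shows "(visc_sub F D u \<and> (\<forall>(x,t)\<in>D. u x t \<le> M) \<and> 0 \<le> M
            \<longrightarrow> (\<forall>t. t1 < t \<and> t < t2 \<longrightarrow> u x0 t = M))
       \<and> (visc_super F D u \<and> (\<forall>(x,t)\<in>D. M \<le> u x t) \<and> M \<le> 0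
            \<longrightarrow> (\<forall>t. t1 < t \<and> t < t2 \<longrightarrow> u x0 t = M))"
  proof (intro conjI impI)
  assume H: "visc_sub F D u \<and> (\<forall>(x,t)\<in>D. u x t \<le> M) \<and> 0 \<le> M"
  show "\<forall>t. t1 < t \<and> t < t2 \<longrightarrow> u x0 t = M"
    using sub_case[OF D_def[THEN meta_eq_to_obj_eq] lam_pos lam_le S b_bdd c_bdd c_nonpos F0 u_cont top uM] H by blast
next
  assume H: "visc_super F D u \<and> (\<forall>(x,t)\<in>D. M \<le> u x t) \<and> M \<le> 0"
  define G :: "'n nonlin" where "G = (\<lambda>x t r p A. - F x t (-r) (-p) (-A))"
  define v where "v = (\<lambda>x t. - u x t)"
  have SG: "structure_S G lam Lam b c D"
    unfolding structure_S_def
  proof (intro allI impI)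
    fix x t r s p q and A N :: "real^'n^'n"
    assume xt: "(x,t) \<in> D" and sA: "sym_mat A" and sN: "sym_mat N" and pN: "psd_mat N"
    have sA': "sym_mat (-A - N)" using sA sN by (simp add: sym_diff sym_neg)
    have "lam * trace N - b x t * norm ((-q) - (-p)) + c x t * ((-s) - (-r))
         \<le> F x t (-s) (-q) ((-A - N) + N) - F x t (-r) (-p) (-A - N)
     \<and> F x t (-s) (-q) ((-A - N) + N) - F x t (-r) (-p) (-A - N)
         \<le> Lam * trace N + b x t * norm ((-q) - (-p)) + c x t * ((-s) - (-r))"
      using S xt sA' sN pN unfolding structure_S_def by blast
    moreover have "norm ((-q) - (-p)) = norm (p - q)" by (simp add: norm_minus_commute)
    moreover have "(-A - N) + N = -A" by simp
    moreover have "-(A + N) = -A - N" by simp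
    ultimately show "lam * trace N - b x t * norm (p - q) + c x t * (r - s)
         \<le> G x t r p (A + N) - G x t s q A
     \<and> G x t r p (A + N) - G x t s q A
         \<le> Lam * trace N + b x t * norm (p - q) + c x t * (r - s)"
      unfolding G_def by (simp add: algebra_simps)
  qed
  have G0: "\<forall>(x,t)\<in>D. G x t 0 0 0 = 0" using F0 by (simp add: G_def)
  have vcont: "continuous_on D (\<lambda>(x,t). v x t)"
  proof -
    have "continuous_on D (\<lambda>z. - (\<lambda>(x,t). u x t) z)" using u_cont by (intro continuous_intros)
    thus ?thesis by (simp add: v_def case_prod_unfold)
  qed
  have subv: "visc_sub G D v"
    unfolding visc_sub_def
  proof (intro allI impI)
    fix x t phi Dphi D2phi phit
    assume xt: "(x,t) \<in> D" and tf: "test_fun phi Dphi D2phi phit"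
      and lm: "loc_max_rel D (\<lambda>y s. v y s - phi y s) x t"
    have tf': "test_fun (\<lambda>y s. - phi y s) (\<lambda>y s. - Dphi y s) (\<lambda>y s. - D2phi y s) (\<lambda>y s. - phit y s)"
      using tf unfolding test_fun_def
    proof (intro conjI allI; (elim conjE)?)
      assume c1: "continuous_on UNIV (\<lambda>(x, t). Dphi x t)"
        and c2: "continuous_on UNIV (\<lambda>(x, t). D2phi x t)"
        and c3: "continuous_on UNIV (\<lambda>(x, t). phit x t)"
        and d1: "\<forall>x t. ((\<lambda>y. phi y t) has_derivative (\<lambda>h. Dphi x t \<bullet> h)) (at x)"
        and d2: "\<forall>x t. ((\<lambda>y. Dphi y t) has_derivative (\<lambda>h. D2phi x t *v h)) (at x)"
        and d3: "\<forall>x t. ((\<lambda>s. phi x s) has_real_derivative phit x t) (at t)"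
      show "continuous_on UNIV (\<lambda>(x, t). - Dphi x t)"
        using continuous_on_minus[OF c1] by (simp add: case_prod_unfold)
      show "continuous_on UNIV (\<lambda>(x, t). - D2phi x t)"
        using continuous_on_minus[OF c2] by (simp add: case_prod_unfold)
      show "continuous_on UNIV (\<lambda>(x, t). - phit x t)"
        using continuous_on_minus[OF c3] by (simp add: case_prod_unfold)
      fix x t
      show "((\<lambda>y. - phi y t) has_derivative (\<lambda>h. - Dphi x t \<bullet> h)) (at x)"
        using has_derivative_minus[OF d1[rule_format, of t x]] by simp
      show "((\<lambda>y. - Dphi y t) has_derivative (\<lambda>h. - D2phi x t *v h)) (at x)"
        using has_derivative_minus[OF d2[rule_format, of t x]] by (simp add: neg_mat_mult)
      show "((\<lambda>s. - phi x s) has_real_derivative - phit x t) (at t)"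
        using DERIV_minus[OF d3[rule_format, of x t]] by simp
    qed
    have lmin: "loc_min_rel D (\<lambda>y s. u y s - (- phi y s)) x t"
      using lm unfolding loc_max_rel_def loc_min_rel_def v_def by (smt (verit))
    have "F x t (u x t) (- Dphi x t) (- D2phi x t) - (- phit x t) \<le> 0"
      using H xt tf' lmin unfolding visc_super_def by blast
    thus "0 \<le> G x t (v x t) (Dphi x t) (D2phi x t) - phit x t"
      by (simp add: G_def v_def)
  qed
  have lev: "\<forall>(x,t)\<in>D. v x t \<le> -M" using H by (auto simp: v_def)
  have vM: "v x0 t2 = - M" using uM by (simp add: v_def)
  have "\<forall>t. t1 < t \<and> t < t2 \<longrightarrow> v x0 t = - M"
    using sub_case[OF D_def[THEN meta_eq_to_obj_eq] lam_pos lam_le SG b_bdd c_bdd c_nonpos G0 vcont top vM subv lev] H by auto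
  thus "\<forall>t. t1 < t \<and> t < t2 \<longrightarrow> u x0 t = M" by (simp add: v_def)
qed

end
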